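(* For every countable graph $G$ with $G < K_\omega$ there exists a countable graph $G''$ with $G < G'' < K_\omega$; that is, no pair $(G, K_\omega)$ is a gap in the class of all countable graphs.
   Context: All graphs are simple, undirected and loopless. $G \le H$ means there is a homomorphism (edge-preserving vertex map) $G \to H$; $G < H$ means $G \le H$ and $H \not\le G$. $K_\omega$ is the countably infinite complete graph. For a class $\mathcal K$ of graphs, a pair $(G_1,G_2)$ with $G_1,G_2\in\mathcal K$, $G_1 < G_2$ is a gap in $\mathcal K$ if there is no $G \in \mathcal K$ with $G_1 < G < G_2$. *)

theory Defs
  imports Main "HOL-Library.Countable_Set"
begin

definition is_graph :: "'a set \<Rightarrow> ('a \<Rightarrow> 'a \<Rightarrow> bool) \<Rightarrow> bool" where
  "is_graph V E \<longleftrightarrow> (\<forall>x y. E x y \<longrightarrow> x \<in> V \<and> y \<in> V) \<and>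
     (\<forall>x y. E x y \<longrightarrow> E y x) \<and> (\<forall>x. \<not> E x x)"

definition countable_graph :: "'a set \<Rightarrow> ('a \<Rightarrow> 'a \<Rightarrow> bool) \<Rightarrow> bool" where
  "countable_graph V E \<longleftrightarrow> is_graph V E \<and> countable V"

definition hom_le :: "'a set \<Rightarrow> ('a \<Rightarrow> 'a \<Rightarrow> bool) \<Rightarrow> 'b set \<Rightarrow> ('b \<Rightarrow> 'b \<Rightarrow> bool) \<Rightarrow> bool" where
  "hom_le V E W F \<longleftrightarrow> (\<exists>f. f ` V \<subseteq> W \<and> (\<forall>x\<in>V. \<forall>y\<in>V. E x y \<longrightarrow> F (f x) (f y)))"

definition hom_less :: "'a set \<Rightarrow> ('a \<Rightarrow> 'a \<Rightarrow> bool) \<Rightarrow> 'b set \<Rightarrow> ('b \<Rightarrow> 'b \<Rightarrow> bool) \<Rightarrow> bool" where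
  "hom_less V E W F \<longleftrightarrow> hom_le V E W F \<and> \<not> hom_le W F V E"

definition K_omega_V :: "nat set" where "K_omega_V = UNIV"
definition K_omega_E :: "nat \<Rightarrow> nat \<Rightarrow> bool" where "K_omega_E x y \<longleftrightarrow> x \<noteq> y"

end

theory Submission
  imports Defs
begin

lemma cone_lemma:
  assumes gV: "\<And>x. x \<in> V \<Longrightarrow> g x \<in> V"
    and gE: "\<And>x y. x \<in> V \<Longrightarrow> y \<in> V \<Longrightarrow> E x y \<Longrightarrow> E (g x) (g y)"
    and v0: "v0 \<in> V"
    and gv0: "\<And>x. x \<in> V \<Longrightarrow> E (g x) v0"
    and sym: "\<And>x y. E x y \<Longrightarrow> E y x"
  shows "hom_le K_omega_V K_omega_E V E"
proof -
  define v where "v k = (g ^^ k) v0" for k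
  have vV: "\<And>k x. x \<in> V \<Longrightarrow> (g ^^ k) x \<in> V"
  proof -
    fix k x assume "x \<in> V" then show "(g ^^ k) x \<in> V"
      by (induction k) (auto intro: gV)
  qed
  have key: "\<And>x. x \<in> V \<Longrightarrow> E ((g ^^ Suc k) x) (v k)" for k
  proof (induction k)
    case 0 then show ?case using gv0 by (simp add: v_def)
  next
    case (Suc k)
    have "E (g ((g ^^ Suc k) x)) (g (v k))"
      using Suc vV v0 gE by (simp add: v_def del: funpow.simps)
    then show ?case by (simp add: v_def)
  qed
  have adj: "E (v j) (v k)" if "k < j" for j k
  proof -
    define m where "m = j - Suc k"
    have m: "j = Suc k + m" using that by (simp add: m_def)
    have "v j = (g ^^ Suc k) (v (j - Suc k))"
      unfolding v_def m by (simp only: funpow_add comp_apply diff_add_inverse m_def[symmetric])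
    then show ?thesis using key[of "v (j - Suc k)" k] vV v0 by (simp add: v_def)
  qed
  show ?thesis unfolding hom_le_def K_omega_V_def K_omega_E_def
  proof (intro exI[of _ v] conjI ballI impI)
    show "v ` UNIV \<subseteq> V" using vV v0 by (auto simp: v_def)
    fix x y :: nat assume "x \<noteq> y"
    then show "E (v x) (v y)" using adj sym by (cases "x < y") (auto simp: not_less)
  qed
qed

theorem mainTheorem4:
  fixes V :: "'a set" and E :: "'a \<Rightarrow> 'a \<Rightarrow> bool"
  assumes "countable_graph V E"
    and "hom_less V E K_omega_V K_omega_E"
  shows "\<exists>(V'' :: nat set) (E'' :: nat \<Rightarrow> nat \<Rightarrow> bool).
           countable_graph V'' E'' \<and> hom_less V E V'' E'' \<and> hom_less V'' E'' K_omega_V K_omega_E"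
proof -
  have cV: "countable V" and gr: "is_graph V E" using assms(1) by (auto simp: countable_graph_def)
  have Esym: "\<And>x y. E x y \<Longrightarrow> E y x" and Eirr: "\<And>x. \<not> E x x"
    and EV: "\<And>x y. E x y \<Longrightarrow> x \<in> V \<and> y \<in> V" using gr by (auto simp: is_graph_def)
  have noK: "\<not> hom_le K_omega_V K_omega_E V E" using assms(2) by (simp add: hom_less_def)
  define e where "e = to_nat_on V"
  have einj: "\<And>x y. x \<in> V \<Longrightarrow> y \<in> V \<Longrightarrow> e x = e y \<longleftrightarrow> x = y"
    using cV by (simp add: e_def)
  have eback: "\<And>x. x \<in> V \<Longrightarrow> from_nat_into V (Suc (e x) - 1) = x"
    using cV by (simp add: e_def)
  define S where "S = Suc ` e ` V"
  define W where "W = insert 0 S"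
  define F where "F u v \<longleftrightarrow> (u = 0 \<and> v \<in> S) \<or> (v = 0 \<and> u \<in> S) \<or>
     (\<exists>x\<in>V. \<exists>y\<in>V. u = Suc (e x) \<and> v = Suc (e y) \<and> E x y)" for u v
  have Firr: "\<not> F u u" for u
    using einj Eirr by (auto simp: F_def S_def)
  have Fsym: "F u v \<Longrightarrow> F v u" for u v
    using Esym by (auto simp: F_def)
  have FW: "F u v \<Longrightarrow> u \<in> W \<and> v \<in> W" for u v
    by (auto simp: F_def W_def S_def)
  have cg: "countable_graph W F"
    unfolding countable_graph_def is_graph_def
    using Firr Fsym FW cV by (auto simp: W_def S_def)
  have le1: "hom_le V E W F"
    unfolding hom_le_def
  proof (intro exI[of _ "\<lambda>x. Suc (e x)"] conjI ballI impI)
    show "(\<lambda>x. Suc (e x)) ` V \<subseteq> W" by (auto simp: W_def S_def)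
    fix x y assume "x \<in> V" "y \<in> V" "E x y"
    then show "F (Suc (e x)) (Suc (e y))" by (auto simp: F_def)
  qed
  have nle1: "\<not> hom_le W F V E"
  proof
    assume "hom_le W F V E"
    then obtain f where fW: "f ` W \<subseteq> V" and fE: "\<forall>x\<in>W. \<forall>y\<in>W. F x y \<longrightarrow> E (f x) (f y)"
      unfolding hom_le_def by blast
    define g where "g x = f (Suc (e x))" for x
    have "hom_le K_omega_V K_omega_E V E"
    proof (rule cone_lemma[where g = g and ?v0.0 = "f 0"])
      show "g x \<in> V" if "x \<in> V" for x using that fW by (auto simp: g_def W_def S_def)
      show "E (g x) (g y)" if "x \<in> V" "y \<in> V" "E x y" for x y
      proof -
        have "F (Suc (e x)) (Suc (e y))" using that by (auto simp: F_def)
        moreover have "Suc (e x) \<in> W" "Suc (e y) \<in> W" using that by (auto simp: W_def S_def)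
        ultimately show ?thesis unfolding g_def using fE by blast
      qed
      show "f 0 \<in> V" using fW by (auto simp: W_def)
      show "E (g x) (f 0)" if "x \<in> V" for x
      proof -
        have "F (Suc (e x)) 0" using that by (auto simp: F_def S_def)
        moreover have "Suc (e x) \<in> W" "0 \<in> W" using that by (auto simp: W_def S_def)
        ultimately show ?thesis unfolding g_def using fE by blast
      qed
      show "E x y \<Longrightarrow> E y x" for x y by (rule Esym)
    qed
    with noK show False by simp
  qed
  have le2: "hom_le W F K_omega_V K_omega_E"
    unfolding hom_le_def K_omega_V_def K_omega_E_def
    using Firr by (intro exI[of _ id]) auto
  have nle2: "\<not> hom_le K_omega_V K_omega_E W F"
  proof
    assume "hom_le K_omega_V K_omega_E W F"
    then obtain h :: "nat \<Rightarrow> nat" where hE0: "\<forall>n\<in>UNIV. \<forall>m\<in>UNIV. n \<noteq> m \<longrightarrow> F (h n) (h m)"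
      unfolding hom_le_def K_omega_V_def K_omega_E_def by (elim exE conjE) (rule that, assumption)
    have hE: "\<And>n m. n \<noteq> m \<Longrightarrow> F (h n) (h m)" using hE0 by simp
    have hinj: "h n = h m \<Longrightarrow> n = m" for n m proof (rule ccontr)
      assume "h n = h m" "n \<noteq> m"
      then show False using hE[of n m] Firr[of "h n"] by simp
    qed
    define \<sigma> where "\<sigma> = (if \<exists>n. h (2*n) = 0 then (\<lambda>n::nat. 2*n+1) else (\<lambda>n. 2*n))"
    have sinj: "\<sigma> n = \<sigma> m \<Longrightarrow> n = m" for n m by (auto simp: \<sigma>_def split: if_splits)
    have snz: "h (\<sigma> n) \<noteq> 0" for n
    proof (cases "\<exists>n. h (2*n) = 0")
      case True
      then obtain k where k: "h (2*k) = 0" by blast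
      have "h (2*n+1) \<noteq> 0"
      proof
        assume "h (2*n+1) = 0"
        with k have "2*k = 2*n+1" using hinj[of "2*k" "2*n+1"] by simp
        then show False by presburger
      qed
      then show ?thesis using True by (simp add: \<sigma>_def)
    next
      case False
      then have "\<sigma> = (\<lambda>n. 2*n)" unfolding \<sigma>_def by (rule if_not_P)
      then show ?thesis using False by simp
    qed
    define b where "b u = from_nat_into V (u - 1)" for u
    have pull: "E (b (h (\<sigma> n))) (b (h (\<sigma> m))) \<and> b (h (\<sigma> n)) \<in> V" if "n \<noteq> m" for n m
    proof -
      have "F (h (\<sigma> n)) (h (\<sigma> m))" using hE sinj that by blast
      then obtain x y where "x \<in> V" "y \<in> V" "h (\<sigma> n) = Suc (e x)" "h (\<sigma> m) = Suc (e y)" "E x y"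
        using snz[of n] snz[of m] unfolding F_def by blast
      then show ?thesis using eback by (simp add: b_def)
    qed
    have "hom_le K_omega_V K_omega_E V E"
      unfolding hom_le_def K_omega_V_def K_omega_E_def
    proof (intro exI[of _ "\<lambda>n. b (h (\<sigma> n))"] conjI ballI impI)
      show "(\<lambda>n. b (h (\<sigma> n))) ` UNIV \<subseteq> V"
      proof clarify
        fix n :: nat
        show "b (h (\<sigma> n)) \<in> V" using pull[of n "Suc n"] by simp
      qed
      fix n m :: nat assume "n \<noteq> m"
      then show "E (b (h (\<sigma> n))) (b (h (\<sigma> m)))" using pull by blast
    qed
    with noK show False by simp
  qed
  show ?thesis
    using cg le1 nle1 le2 nle2 unfolding hom_less_def by blast
qed

end
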